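(* Let $s\ge26$ be an integer, $\psi_s(z):=z^{s-1}(z+s)-(s-1)^{s-1}$, and let $\alpha$ be a nontrivial root of $\psi_s$ of degree $d$, with conjugates $\beta_1,\dots,\beta_d$ and $N:=\prod_j\beta_j$. Let $n$ be the integer with $nN=(s-1)^d$ (so $|n|\ge2$ and $n\mid s-1$). Then $$d>\frac{(\log|n|)(s-1)}{1+\log(s-1)}\ge\delta(s):=\frac{(\log p_s)(s-1)}{1+\log(s-1)},$$ where $p_s$ is the least prime factor of $s-1$.
   Context: When $s$ is odd, $z=1-s$ is a double root of $\psi_s$, called trivial; all other roots are nontrivial. When $s$ is even all roots are nontrivial. For nontrivial $\alpha$ the number $(s-1)^d/N$ is known to be an integer $n$ with $|n|\ge2$ and $n\mid(s-1)$. *)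

theory Defs
  imports "HOL-Analysis.Analysis" "HOL-Computational_Algebra.Computational_Algebra"
begin

definition psi :: "nat \<Rightarrow> int poly" where
  "psi s = monom 1 (s - 1) * [:int s, 1:] - [:(int s - 1) ^ (s - 1):]"

definition trivial_root :: "nat \<Rightarrow> complex \<Rightarrow> bool" where
  "trivial_root s z \<longleftrightarrow> odd s \<and> z = 1 - of_nat s"

definition least_prime_factor :: "nat \<Rightarrow> nat" where
  "least_prime_factor m = Min (prime_factors m)"

definition delta :: "nat \<Rightarrow> real" where
  "delta s = ln (real (least_prime_factor (s - 1))) * (real s - 1) / (1 + ln (real s - 1))"

end

theory Submission
  imports Defs "Berlekamp_Zassenhaus.Square_Free_Int_To_Square_Free_GFp"
begin



lemma exp1_gt: "exp (1::real) \<ge> 9/4"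
proof -
  have "1 + 1/2 \<le> exp (1/2::real)" by (rule exp_ge_add_one_self)
  hence "(3/2)^2 \<le> (exp (1/2::real))^2" by (intro power_mono) auto
  also have "(exp (1/2::real))^2 = exp 1" by (simp add: power2_eq_square flip: exp_add)
  finally show ?thesis by (simp add: power2_eq_square)
qed

lemma root_ub:
  fixes x :: complex
  assumes s: "s \<ge> 26" and eq: "x ^ s = of_nat s * x + of_nat (s-1)"
  shows "cmod x ^ (s-1) < exp 1 * real (s-1)"
proof -
  let ?r = "cmod x"
  have rs1: "real (s-1) = real s - 1" using s by (simp only: of_nat_diff of_nat_1)
  have "?r ^ s = cmod (x ^ s)" by (rule norm_power[symmetric])
  also have "\<dots> = cmod (of_nat s * x + of_nat (s-1))" by (simp only: eq)
  also have "\<dots> \<le> cmod (of_nat s * x) + cmod (of_nat (s-1) :: complex)" by (rule norm_triangle_ineq)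
  also have "cmod (of_nat s * x) = real s * ?r" by (simp only: norm_mult norm_of_nat)
  also have "cmod (of_nat (s-1) :: complex) = real (s-1)" by (rule norm_of_nat)
  finally have A: "?r^s \<le> real s * ?r + real (s-1)" .
  have e: "exp 1 * real (s-1) > 2 * real s - 1"
  proof -
    have "exp 1 * real (s-1) \<ge> 9/4 * real (s-1)" using exp1_gt by (rule mult_right_mono) simp
    moreover have "real s \<ge> 26" using s by simp
    ultimately show ?thesis using rs1 by linarith
  qed
  show ?thesis
  proof (cases "?r \<ge> 1")
    case True
    have ss: "s = Suc (s-1)" using s by simp
    from ss have "?r^s = ?r^(Suc (s-1))" by (rule arg_cong)
    also have "\<dots> = ?r * ?r^(s-1)" by (rule power_Suc)
    finally have rs: "?r^s = ?r * ?r^(s-1)" .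
    have m1: "real (s-1) * 1 \<le> real (s-1) * ?r" using True by (rule mult_left_mono) simp
    have "?r * ?r^(s-1) \<le> real s * ?r + real (s-1) * ?r" using A rs m1 by linarith
    also have "\<dots> = ?r * (real s + real (s-1))" by (simp only: distrib_left mult.commute)
    finally have "?r * ?r^(s-1) \<le> ?r * (real s + real (s-1))" .
    hence "?r^(s-1) \<le> real s + real (s-1)" by (rule mult_left_le_imp_le) (use True in linarith)
    thus ?thesis using e rs1 by linarith
  next
    case False
    hence "?r^(s-1) \<le> 1" by (simp add: power_le_one)
    moreover have "exp 1 * real (s-1) > 1" using e s by linarith
    ultimately show ?thesis by linarith
  qed
qed

lemma root_unit_circle:
  fixes x :: complex
  assumes eq: "x ^ s = of_nat s * x + of_nat (s-1)" and s: "s \<ge> 2" and r: "cmod x = 1"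
  shows "x = -1" "odd s"
proof -
  have "cmod (of_nat s * x + of_nat (s-1)) = 1" by (metis eq norm_power r power_one)
  hence "(cmod (of_nat s * x + of_nat (s-1)))^2 = 1" by simp
  hence h1: "(real s * Re x + real (s-1))^2 + (real s * Im x)^2 = 1" by (simp add: cmod_power2)
  have h2: "(Re x)^2 + (Im x)^2 = 1" using r cmod_power2[of x] by simp
  have "(real s * Re x + real (s-1))^2 + (real s * Im x)^2 = real s ^2 * ((Re x)^2 + (Im x)^2) + 2 * real s * real (s-1) * Re x + real (s-1)^2"
    by (simp add: power2_eq_square algebra_simps)
  hence "2 * real s * real (s-1) * Re x = 1 - real s ^2 - real (s-1)^2" using h1 h2 by simp
  also have "\<dots> = 2 * real s * real (s-1) * (-1)" using s by (simp add: of_nat_diff power2_eq_square algebra_simps)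
  finally have "2 * real s * real (s-1) * Re x = 2 * real s * real (s-1) * (-1)" .
  moreover have "2 * real s * real (s-1) \<noteq> 0" using s by simp
  ultimately have "Re x = -1" by (metis mult_left_cancel)
  moreover hence "Im x = 0" using h2 by simp
  ultimately show x: "x = -1" by (simp add: complex_eq_iff)
  show "odd s"
  proof
    assume "even s"
    hence "x ^ s = 1" using x by simp
    moreover have "of_nat s * x + of_nat (s-1) = (-1 :: complex)" using x s by (simp add: of_nat_diff)
    ultimately show False using eq by simp
  qed
qed

lemma root_odd_gt1:
  fixes x :: complex
  assumes eq: "x ^ s = of_nat s * x + of_nat (s-1)" and s: "s \<ge> 2" and odd: "odd s" and x: "x \<noteq> -1"
  shows "cmod x > 1"
proof (rule ccontr)
  assume "\<not> cmod x > 1"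
  hence le: "cmod x \<le> 1" by simp
  have "(-x)^s - 1^s = (-x - 1) * (\<Sum>i<s. 1 ^ (s - Suc i) * (-x)^i)" by (rule power_diff_sumr2)
  hence "-(x^s) - 1 = (-x - 1) * (\<Sum>i<s. (-x)^i)" using odd by simp
  hence "x^s + 1 = (x + 1) * (\<Sum>i<s. (-x)^i)" by (simp add: algebra_simps)
  moreover have "x^s + 1 = (x + 1) * of_nat s" using eq s by (simp add: of_nat_diff algebra_simps)
  ultimately have "(x + 1) * (\<Sum>i<s. (-x)^i) = (x + 1) * of_nat s" by metis
  moreover have "x + 1 \<noteq> 0" using x by (metis add.commute add_eq_0_iff)
  ultimately have S: "(\<Sum>i<s. (-x)^i) = of_nat s" by (metis mult_left_cancel)
  hence "Re (\<Sum>i<s. (-x)^i) = real s" by simp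
  hence "(\<Sum>i<s. Re ((-x)^i)) = real s" by (simp only: Re_sum)
  moreover have "{..<s} = insert 1 ({..<s} - {1})" using s by auto
  ultimately have "Re (-x) + (\<Sum>i\<in>{..<s} - {1}. Re ((-x)^i)) = real s"
    by (metis (no_types, lifting) Diff_iff finite_Diff finite_lessThan power_one_right singletonI sum.insert)
  moreover have "(\<Sum>i\<in>{..<s} - {1}. Re ((-x)^i)) \<le> (\<Sum>i\<in>{..<s} - {1}. 1)"
  proof (rule sum_mono)
    fix i assume "i \<in> {..<s} - {1}"
    have "Re ((-x)^i) \<le> cmod ((-x)^i)" by (rule complex_Re_le_cmod)
    also have "\<dots> = cmod x ^ i" by (simp add: norm_power)
    also have "\<dots> \<le> 1" using le by (simp add: power_le_one)
    finally show "Re ((-x)^i) \<le> 1" .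
  qed
  moreover have "(\<Sum>i\<in>{..<s} - {1}. (1::real)) = real s - 1" using s by (simp add: card_Diff_singleton)
  ultimately have "Re (-x) \<ge> 1" by linarith
  hence r: "Re x \<le> -1" by simp
  have "(Re x)^2 + (Im x)^2 = (cmod x)^2" by (simp add: cmod_power2)
  also have "\<dots> \<le> 1" using le by (simp add: power_le_one)
  finally have h: "(Re x)^2 + (Im x)^2 \<le> 1" .
  have "\<bar>Re x\<bar> \<le> 1" using le abs_Re_le_cmod[of x] by linarith
  hence rx: "Re x = -1" using r by linarith
  hence "(Im x)^2 \<le> 0" using h by simp
  hence "Im x = 0" by simp
  with rx have "x = -1" by (simp add: complex_eq_iff)
  with x show False by simp
qed

lemma root_pair:
  fixes x1 x2 :: complex
  assumes eq1: "x1 ^ s = of_nat s * x1 + of_nat (s-1)" and eq2: "x2 ^ s = of_nat s * x2 + of_nat (s-1)"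
    and s: "s \<ge> 2" and l1: "cmod x1 < 1" and l2: "cmod x2 < 1"
  shows "x1 = x2"
proof (rule ccontr)
  assume ne: "x1 \<noteq> x2"
  have "x1^s - x2^s = (x1 - x2) * (\<Sum>i<s. x2 ^ (s - Suc i) * x1^i)" by (rule power_diff_sumr2)
  moreover have "x1^s - x2^s = (x1 - x2) * of_nat s" using eq1 eq2 by (simp add: algebra_simps)
  ultimately have "(\<Sum>i<s. x2 ^ (s - Suc i) * x1^i) = of_nat s" using ne by simp
  hence "real s = cmod (\<Sum>i<s. x2 ^ (s - Suc i) * x1^i)" by simp
  also have "\<dots> \<le> (\<Sum>i<s. cmod (x2 ^ (s - Suc i) * x1^i))" by (rule norm_sum)
  also have "\<dots> < (\<Sum>i<s. 1)"
  proof (rule sum_strict_mono)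
    fix i assume i: "i \<in> {..<s}"
    define m where "m = max (cmod x1) (cmod x2)"
    have m: "m < 1" "0 \<le> m" using l1 l2 by (auto simp: m_def le_max_iff_disj)
    have "cmod (x2 ^ (s - Suc i) * x1^i) = cmod x2 ^ (s - Suc i) * cmod x1 ^ i" by (simp add: norm_mult norm_power)
    also have "\<dots> \<le> m ^ (s - Suc i) * m ^ i" by (intro mult_mono power_mono) (auto simp: m_def le_max_iff_disj intro: zero_le_power)
    also have "\<dots> = m ^ (s - 1)" using i by (simp flip: power_add)
    also have "\<dots> < 1" using m s by (simp add: power_less_one_iff)
    finally show "cmod (x2 ^ (s - Suc i) * x1^i) < 1" .
  qed (use s in \<open>simp_all add: lessThan_empty_iff\<close>)
  finally show False by simp
qed

lemma root_small_lb:
  fixes x :: complex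
  assumes eq: "x ^ s = of_nat s * x + of_nat (s-1)" and s: "s \<ge> 2" and l: "cmod x < 1"
  shows "real s * cmod x \<ge> real s - 2"
proof -
  have "of_nat s * x = x^s - of_nat (s-1)" using eq by simp
  hence "real s * cmod x = cmod (of_nat (s-1) - x^s)" by (metis norm_mult norm_of_nat norm_minus_commute)
  also have "\<dots> \<ge> cmod (of_nat (s-1) :: complex) - cmod (x^s)" by (rule norm_triangle_ineq2)
  finally have "real s * cmod x \<ge> real (s-1) - cmod x ^ s" by (simp add: norm_power)
  moreover have "cmod x ^ s \<le> 1" using l by (simp add: power_le_one)
  ultimately show ?thesis using s by (simp add: of_nat_diff)
qed



lemma K_bound:
  assumes s: "s \<ge> (26::nat)"
  shows "(real s / (real s - 2)) ^ s < 9"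
proof -
  define t where "t = 2 / (real s - 2)"
  have t0: "t \<ge> 0" using s by (simp add: t_def)
  have q: "real s / (real s - 2) = 1 + t" using s by (simp add: t_def field_simps)
  have "(1 + t) ^ s \<le> exp t ^ s" using t0 by (intro power_mono) (simp_all add: exp_ge_add_one_self)
  also have "\<dots> = exp (real s * t)" by (simp add: exp_of_nat_mult)
  also have "real s * t \<le> 13/6"
  proof -
    have "real s * t = 2 + 4 / (real s - 2)" using s by (simp add: t_def field_simps)
    moreover have "4 / (real s - 2) \<le> 1/6" using s by (simp add: field_simps)
    ultimately show ?thesis by simp
  qed
  hence "exp (real s * t) \<le> exp (13/6)" by simp
  also have "exp (13/6::real) = exp 1 * exp 1 * exp (1/6)" by (simp flip: exp_add)
  also have "\<dots> < 9"
  proof -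
    have e1: "exp (1::real) < 272/100" by (rule e_less_272)
    have "exp (-(1/6::real)) \<ge> 1 - 1/6" by (rule exp_minus_ge)
    hence B: "exp (1/6::real) \<le> 6/5" by (simp add: exp_minus field_simps)
    have A: "exp 1 * exp (1::real) < 272/100 * (272/100)" by (rule mult_strict_mono[OF e1 e1]) auto
    have "exp 1 * exp 1 * exp (1/6::real) < 272/100 * (272/100) * (6/5)"
      by (rule mult_less_le_imp_less[OF A B]) auto
    thus ?thesis by simp
  qed
  finally show ?thesis using q by simp
qed

lemma sin_pi_over:
  assumes s: "s \<ge> (26::nat)"
  shows "sin (pi / real s) \<ge> 3 / real s"
proof -
  define t where "t = pi / real s"
  have "\<bar>sin t - (\<Sum>m<3. sin_coeff m * t ^ m)\<bar> \<le> inverse (fact 3) * \<bar>t\<bar> ^ 3" by (rule Maclaurin_sin_bound)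
  moreover have "(\<Sum>m<3. sin_coeff m * t ^ m) = t" by (simp add: sin_coeff_def numeral_3_eq_3)
  moreover have "\<bar>t\<bar> = t" using s by (simp add: t_def)
  ultimately have "\<bar>sin t - t\<bar> \<le> t^3 / 6" by (simp add: fact_numeral)
  hence "sin t \<ge> t - t^3 / 6" using abs_ge_minus_self[of "sin t - t"] by linarith
  moreover have "t - t^3/6 \<ge> 3 / real s"
  proof -
    have p1: "pi \<ge> 314/100" using pi_approx by simp
    have p2: "pi \<le> 4" using pi_less_4 by simp
    have "t^3/6 = pi^3 / (6 * real s ^ 3)" by (simp add: t_def power_divide)
    also have "\<dots> \<le> 64 / (6 * real s ^ 3)" using p2 s
      by (intro divide_right_mono) (auto intro: order.trans[OF power_mono[of pi 4 3]])
    also have "\<dots> \<le> (14/100) / real s"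
    proof -
      have "real s ^ 2 \<ge> 26^2" using s by (intro power_mono) auto
      hence "64 \<le> (14/100) * (6 * real s^2)" by simp
      hence "64 * real s \<le> (14/100) * (6 * real s ^ 3)" using s by (simp add: power2_eq_square power3_eq_cube)
      thus ?thesis using s by (simp add: field_simps)
    qed
    also have "\<dots> \<le> t - 3 / real s" using p1 s by (simp add: t_def field_simps)
    finally show ?thesis by simp
  qed
  ultimately show ?thesis by (simp add: t_def)
qed



lemma root_even_real:
  fixes x :: complex
  assumes eq: "x ^ s = of_nat s * x + of_nat (s-1)" and ev: "even s" and s: "s \<ge> 26"
    and im: "Im x = 0" and gt: "cmod x > 1"
  shows "cmod x * ((real s - 2) / real s) > 1"
proof -
  define a where "a = Re x"
  have xa: "x = complex_of_real a" using im by (simp add: a_def complex_eq_iff)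
  have "complex_of_real (a ^ s) = complex_of_real (real s * a + real (s-1))" using eq by (simp add: xa)
  hence eqa: "a ^ s = real s * a + real (s-1)" by (simp only: of_real_eq_iff)
  have ca: "cmod x = \<bar>a\<bar>" by (simp add: xa)
  have apos: "a > 1"
  proof (rule ccontr)
    assume "\<not> a > 1"
    hence "a < -1" using gt ca by linarith
    hence "real s * a \<le> real s * (-1)" by (intro mult_left_mono) auto
    hence "real s * a + real (s-1) < 0" using s by (simp add: of_nat_diff)
    moreover have "a ^ s \<ge> 0" using ev by (simp add: zero_le_even_power)
    ultimately show False using eqa by simp
  qed
  have "real s * a \<ge> real s * 1" using apos by (intro mult_left_mono) auto
  moreover have "real (s-1) = real s - 1" "real s \<ge> 26" using s by (simp_all add: of_nat_diff)
  ultimately have big: "a ^ s \<ge> 9" using eqa by linarith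
  show ?thesis
  proof (rule ccontr)
    assume "\<not> ?thesis"
    hence "a * ((real s - 2) / real s) \<le> 1" using ca apos by simp
    hence "a \<le> real s / (real s - 2)" using s by (simp add: field_simps)
    hence "a ^ s \<le> (real s / (real s - 2)) ^ s" using apos by (intro power_mono) auto
    with K_bound[OF s] big show False by linarith
  qed
qed

lemma root_nonreal_core:
  fixes x :: complex
  assumes eq: "x ^ s = of_nat s * x + of_nat (s-1)" and ev: "even s" and s: "s \<ge> 26"
    and im: "Im x > 0" and re: "Re x < 0"
  shows "cmod x ^ (s-1) \<ge> 3"
proof (rule ccontr)
  assume "\<not> cmod x ^ (s-1) \<ge> 3"
  hence lt: "cmod x ^ (s-1) < 3" by simp
  define r where "r = cmod x"
  define \<phi> where "\<phi> = Arg x"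
  have x0: "x \<noteq> 0" using im by auto
  hence r0: "r > 0" by (simp add: r_def)
  have xr: "x = rcis r \<phi>" by (simp add: r_def \<phi>_def rcis_cmod_Arg)
  have imx: "Im x = r * sin \<phi>" by (subst xr) simp
  hence sphi: "sin \<phi> > 0" using im r0 by (simp add: zero_less_mult_iff)
  have "Re x = r * cos \<phi>" by (subst xr) simp
  hence cphi: "cos \<phi> < 0" using re r0 by (simp add: mult_less_0_iff)
  have b1: "- pi < \<phi>" "\<phi> \<le> pi" using Arg_bounded[of x] by (simp_all add: \<phi>_def)
  have p0: "\<phi> > 0"
  proof (rule ccontr)
    assume "\<not> \<phi> > 0"
    hence "sin (-\<phi>) \<ge> 0" using b1 by (intro sin_ge_zero) auto
    thus False using sphi by simp
  qed
  have p2: "\<phi> > pi/2"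
  proof (rule ccontr)
    assume "\<not> \<phi> > pi/2"
    hence "cos \<phi> \<ge> 0" using p0 by (intro cos_ge_zero) auto
    thus False using cphi by simp
  qed
  have p3: "\<phi> < pi" using b1 sphi by (cases "\<phi> = pi") auto
  define \<psi> where "\<psi> = pi - \<phi>"
  have q0: "0 < \<psi>" "\<psi> < pi/2" using p2 p3 by (auto simp: \<psi>_def)
  have sq: "sin \<psi> = sin \<phi>" by (simp add: \<psi>_def)
  have "Im (x ^ s) = r ^ s * sin (real s * \<phi>)" by (subst xr) (simp add: DeMoivre2)
  moreover have "Im (x ^ s) = real s * Im x" using eq by simp
  hence "Im (x ^ s) = real s * (r * sin \<phi>)" using imx by simp
  ultimately have E: "r ^ s * sin (real s * \<phi>) = real s * (r * sin \<phi>)" by simp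
  have ss: "s = Suc (s-1)" using s by simp
  from ss have "r^s = r^(Suc (s-1))" by (rule arg_cong)
  also have "\<dots> = r * r^(s-1)" by (rule power_Suc)
  finally have rs: "r ^ s = r * r ^ (s-1)" .
  have "r * (r ^ (s-1) * sin (real s * \<phi>)) = r ^ s * sin (real s * \<phi>)" by (simp only: rs mult.assoc)
  also have "\<dots> = real s * (r * sin \<phi>)" by (rule E)
  also have "\<dots> = r * (real s * sin \<phi>)" by (rule mult.left_commute)
  finally have "r * (r ^ (s-1) * sin (real s * \<phi>)) = r * (real s * sin \<phi>)" .
  hence E2: "r ^ (s-1) * sin (real s * \<phi>) = real s * sin \<phi>" using r0 by simp
  have "real s * \<phi> = real s * pi - real s * \<psi>" by (simp add: \<psi>_def right_diff_distrib)
  hence "sin (real s * \<phi>) = sin (real s * pi - real s * \<psi>)" by (simp only:)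
  also have "\<dots> = sin (real s * pi) * cos (real s * \<psi>) - cos (real s * pi) * sin (real s * \<psi>)"
    by (rule sin_diff)
  also have "\<dots> = - sin (real s * \<psi>)" by (simp only: sin_npi cos_npi neg_one_even_power[OF ev] mult_zero_left mult_1_left diff_0)
  finally have E3: "r ^ (s-1) * (- sin (real s * \<psi>)) = real s * sin \<psi>" using E2 sq by simp
  have "real s * sin \<psi> > 0" using sphi sq s by simp
  hence pp: "0 < r ^ (s-1) * (- sin (real s * \<psi>))" using E3 by simp
  have rp: "0 < r ^ (s-1)" using r0 by simp
  have "0 < - sin (real s * \<psi>)" by (rule zero_less_mult_pos[OF pp rp])
  hence neg: "sin (real s * \<psi>) < 0" by simp
  have "real s * sin \<psi> \<le> r ^ (s-1)"
  proof -
    have "- sin (real s * \<psi>) \<le> 1" by simp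
    hence "r ^ (s-1) * (- sin (real s * \<psi>)) \<le> r ^ (s-1) * 1" using r0 by (intro mult_left_mono) auto
    thus ?thesis using E3 by simp
  qed
  hence "real s * sin \<psi> < 3" using lt by (simp add: r_def)
  hence ssmall: "sin \<psi> < 3 / real s" using s by (simp add: field_simps)
  have "\<psi> < pi / real s"
  proof (rule ccontr)
    assume "\<not> \<psi> < pi / real s"
    hence a2: "pi / real s \<le> \<psi>" by simp
    have "0 \<le> pi / real s" by simp
    hence a1: "-(pi/2) \<le> pi / real s" using pi_gt_zero by linarith
    have "sin (pi / real s) \<le> sin \<psi>" by (rule sin_monotone_2pi_le[OF a1 a2]) (use q0 in linarith)
    with sin_pi_over[OF s] ssmall show False by linarith
  qed
  hence "real s * \<psi> < pi" using s by (simp add: field_simps)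
  moreover have "real s * \<psi> > 0" using q0 s by simp
  ultimately have "sin (real s * \<psi>) > 0" by (intro sin_gt_zero)
  with neg show False by simp
qed

lemma root_nonreal:
  fixes x :: complex
  assumes eq: "x ^ s = of_nat s * x + of_nat (s-1)" and ev: "even s" and s: "s \<ge> 26"
    and im: "Im x \<noteq> 0"
  shows "cmod x ^ (s-1) \<ge> 3"
proof (cases "Re x < 0")
  case True
  show ?thesis
  proof (cases "Im x > 0")
    case True
    with \<open>Re x < 0\<close> show ?thesis by (intro root_nonreal_core[OF eq ev s])
  next
    case False
    hence im': "Im (cnj x) > 0" using im by simp
    have "cnj (x ^ s) = cnj (of_nat s * x + of_nat (s-1))" using eq by simp
    hence eq': "cnj x ^ s = of_nat s * cnj x + of_nat (s-1)" by simp
    have "cmod (cnj x) ^ (s-1) \<ge> 3" using \<open>Re x < 0\<close> im' by (intro root_nonreal_core[OF eq' ev s]) auto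
    thus ?thesis by simp
  qed
next
  case False
  show ?thesis
  proof (rule ccontr)
    assume "\<not> ?thesis"
    hence lt: "cmod x ^ (s-1) < 3" by simp
    have r2: "cmod x < 2"
    proof (rule ccontr)
      assume "\<not> cmod x < 2"
      hence "2 ^ (s-1) \<le> cmod x ^ (s-1)" by (intro power_mono) auto
      moreover have "(2::real) ^ 2 \<le> 2 ^ (s-1)" using s by (intro power_increasing) auto
      ultimately show False using lt by simp
    qed
    have "real s * Re x + real (s-1) = Re (of_nat s * x + of_nat (s-1))" by simp
    also have "\<dots> \<le> cmod (of_nat s * x + of_nat (s-1))" by (rule complex_Re_le_cmod)
    also have "\<dots> = cmod (x ^ s)" by (simp only: eq)
    also have "\<dots> = cmod x ^ s" by (rule norm_power)
    also have "\<dots> = cmod x * cmod x ^ (s-1)"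
    proof -
      have ss: "s = Suc (s-1)" using s by simp
      show ?thesis by (subst ss) (simp only: power_Suc diff_Suc_1)
    qed
    also have "\<dots> \<le> 2 * 3" using r2 lt by (intro mult_mono) auto
    finally have "real s * Re x + real (s-1) \<le> 6" by simp
    moreover have "real s * Re x \<ge> 0" using False by simp
    moreover have "real (s-1) \<ge> 25" using s by simp
    ultimately show False by linarith
  qed
qed

lemma root_nonreal_big:
  fixes x :: complex
  assumes eq: "x ^ s = of_nat s * x + of_nat (s-1)" and ev: "even s" and s: "s \<ge> 26"
    and im: "Im x \<noteq> 0"
  shows "cmod x ^ 2 * ((real s - 2) / real s) > 1"
proof (rule ccontr)
  assume "\<not> ?thesis"
  hence "cmod x ^ 2 \<le> real s / (real s - 2)" using s by (simp add: field_simps)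
  hence "(cmod x ^ 2) ^ (s-1) \<le> (real s / (real s - 2)) ^ (s-1)" by (intro power_mono) auto
  also have "\<dots> \<le> (real s / (real s - 2)) ^ s" using s by (intro power_increasing) (auto simp: field_simps)
  also have "\<dots> < 9" by (rule K_bound[OF s])
  finally have A: "(cmod x ^ (s-1)) ^ 2 < 9" by (simp flip: power_mult add: mult.commute)
  have "(3::real) ^ 2 \<le> (cmod x ^ (s-1)) ^ 2" using root_nonreal[OF eq ev s im] by (intro power_mono) auto
  with A show False by simp
qed




lemma psi_poly:
  assumes s: "s \<ge> 1"
  shows "poly (map_poly (of_int :: int \<Rightarrow> complex) (psi s)) z = z^(s-1) * (z + of_nat s) - of_nat (s-1) ^ (s-1)"
  using s by (simp add: psi_def hom_distribs poly_monom of_nat_diff)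

lemma psi_lead:
  assumes s: "s \<ge> 2"
  shows "lead_coeff (psi s) = 1" "degree (psi s) = s"
proof -
  define A :: "int poly" where "A = Polynomial.monom 1 (s-1) * [:int s, 1:]"
  have "degree A = degree (Polynomial.monom (1::int) (s-1)) + degree [:int s, 1:]" unfolding A_def by (rule degree_mult_eq) auto
  hence dA: "degree A = s" using s by (simp add: degree_monom_eq)
  have lA: "lead_coeff A = 1" unfolding A_def lead_coeff_mult by (simp add: degree_monom_eq)
  have ps: "psi s = [:- ((int s - 1) ^ (s - 1)):] + A" by (simp add: psi_def A_def)
  have d0: "degree [:- ((int s - 1) ^ (s - 1)):] < degree A" using dA s by simp
  show "lead_coeff (psi s) = 1" unfolding ps using lead_coeff_add_le[OF d0] lA by simp
  show "degree (psi s) = s" unfolding ps using degree_add_eq_right[OF d0] dA by simp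
qed

lemma irreducible_imp_square_free':
  assumes irr: "irreducible (p::'a::idom poly)" shows "square_free p"
proof(intro square_freeI)
  from irr show p0: "p \<noteq> 0" by auto
  fix a assume "a * a dvd p"
  then obtain b where paab: "p = a * (a * b)" by (elim dvdE, auto)
  assume "degree a > 0"
  then have a1: "\<not> a dvd 1" by (auto simp: poly_dvd_1)
  then have ab1: "\<not> a * b dvd 1" using dvd_mult_left by auto
  from paab irr a1 ab1 show False by force
qed

lemma p_dvd_psi:
  fixes p :: "rat poly" and \<alpha> :: complex
  assumes irr: "irreducible p" and r1: "poly (map_poly of_rat p) \<alpha> = 0"
    and r2: "poly (map_poly of_int (psi s)) \<alpha> = 0"
  shows "p dvd map_poly of_int (psi s)"
proof -
  interpret h: field_hom' "of_rat :: rat \<Rightarrow> complex" by unfold_locales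
  define Q :: "rat poly" where "Q = map_poly of_int (psi s)"
  have mQ: "map_poly (of_rat :: rat \<Rightarrow> complex) Q = map_poly of_int (psi s)"
    unfolding Q_def by (subst map_poly_map_poly) (auto simp: o_def)
  define g where "g = gcd p Q"
  have d1: "[:-\<alpha>, 1:] dvd map_poly of_rat p" using r1 by (simp only: poly_eq_0_iff_dvd)
  have d2: "[:-\<alpha>, 1:] dvd map_poly of_rat Q" using r2 unfolding mQ by (simp only: poly_eq_0_iff_dvd)
  have "[:-\<alpha>, 1:] dvd gcd (map_poly of_rat p) (map_poly of_rat Q)" by (rule gcd_greatest[OF d1 d2])
  hence "[:-\<alpha>, 1:] dvd map_poly of_rat g" by (simp only: g_def h.map_poly_gcd)
  hence rg: "poly (map_poly of_rat g) \<alpha> = 0" by (simp only: poly_eq_0_iff_dvd)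
  have gnu: "\<not> is_unit g"
  proof
    assume "is_unit g"
    hence "degree g = 0" "g \<noteq> 0" by (auto simp: is_unit_iff_degree)
    then obtain c where "g = [:c:]" "c \<noteq> 0" by (metis degree_eq_zeroE pCons_0_0)
    with rg show False by simp
  qed
  have "g dvd p" by (simp add: g_def)
  then obtain h where ph: "p = g * h" by (elim dvdE)
  from irreducibleD[OF irr ph] gnu have "is_unit h" by blast
  hence "p dvd g" using ph by (metis dvd_refl mult_unit_dvd_iff)
  also have "g dvd Q" by (simp add: g_def)
  finally show ?thesis by (simp add: Q_def)
qed

lemma p_integral:
  fixes p :: "rat poly"
  assumes dvd: "p dvd map_poly of_int (psi s)" and mon: "lead_coeff p = 1" and s: "s \<ge> 2"
  shows "\<exists>P :: int poly. p = map_poly of_int P"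
proof -
  obtain h where ph: "map_poly rat_of_int (psi s) = p * h" using dvd by (elim dvdE)
  obtain r rg where rn: "rat_to_normalized_int_poly p = (r, rg)" by force
  from rat_to_int_factor_explicit[OF ph rn] obtain r' where e: "psi s = rg * Polynomial.smult (content (psi s)) r'" by blast
  have p_eq: "p = Polynomial.smult r (map_poly of_int rg)" and rpos: "r > 0"
    using rat_to_normalized_int_poly[OF rn] by auto
  have "1 = lead_coeff (psi s)" using psi_lead s by simp
  also have "\<dots> = lead_coeff (rg * Polynomial.smult (content (psi s)) r')" using e by (rule arg_cong)
  also have "\<dots> = lead_coeff rg * lead_coeff (Polynomial.smult (content (psi s)) r')" by (rule lead_coeff_mult)
  finally have "is_unit (lead_coeff rg)" by (metis dvd_triv_left)
  hence lr: "\<bar>lead_coeff rg\<bar> = 1" by simp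
  have "1 = lead_coeff p" using mon by simp
  also have "\<dots> = r * of_int (lead_coeff rg)" by (simp add: p_eq)
  finally have rl: "r * of_int (lead_coeff rg) = 1" by simp
  have "lead_coeff rg = 1"
  proof (rule ccontr)
    assume "lead_coeff rg \<noteq> 1"
    hence "lead_coeff rg = -1" using lr by (simp add: abs_if split: if_splits)
    thus False using rl rpos by simp
  qed
  hence "r = 1" using rl by simp
  hence "p = map_poly of_int rg" using p_eq by simp
  thus ?thesis by blast
qed

lemma roots_factor:
  fixes p :: "rat poly"
  assumes irr: "irreducible p" and mon: "lead_coeff p = 1"
  shows "card {\<beta>::complex. poly (map_poly of_rat p) \<beta> = 0} = degree p" "finite {\<beta>::complex. poly (map_poly of_rat p) \<beta> = 0}"
    "map_poly (of_rat :: rat \<Rightarrow> complex) p = (\<Prod>\<beta>\<in>{\<beta>::complex. poly (map_poly of_rat p) \<beta> = 0}. [:-\<beta>, 1:])"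
proof -
  define R where "R = {\<beta>. poly (map_poly (of_rat :: rat \<Rightarrow> complex) p) \<beta> = 0}"
  define q where "q = map_poly (of_rat :: rat \<Rightarrow> complex) p"
  interpret h: field_hom_0' "of_rat :: rat \<Rightarrow> complex" by unfold_locales
  have sf: "square_free p" by (rule irreducible_imp_square_free'[OF irr])
  hence "square_free q" by (simp add: q_def h.square_free_map_poly)
  hence rsf: "rsquarefree q" by (rule square_free_rsquarefree)
  have p0: "p \<noteq> 0" using irr by auto
  hence q0: "q \<noteq> 0" by (simp add: q_def)
  have dq: "degree q = degree p" by (simp add: q_def)
  have cardR: "card R = degree p" using rsquarefree_card_degree[OF q0] rsf dq by (simp add: R_def q_def)
  obtain as where fa: "Polynomial.smult (lead_coeff q) (\<Prod>a\<leftarrow>as. [:-a,1:]) = q" and la: "length as = degree q"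
    using fundamental_theorem_algebra_factorized by blast
  have lq: "lead_coeff q = 1" using mon by (simp add: q_def)
  hence fa': "q = (\<Prod>a\<leftarrow>as. [:-a,1:])" using fa by simp
  have setas: "R = set as"
  proof -
    have "\<And>b. poly q b = 0 \<longleftrightarrow> b \<in> set as"
      unfolding fa' poly_prod_list prod_list_zero_iff by auto
    thus ?thesis by (auto simp: R_def q_def)
  qed
  have dist: "distinct as" using card_distinct[of as] cardR setas la dq by simp
  have "(\<Prod>\<beta>\<in>R. [:-\<beta>, 1:]) = (\<Prod>a\<leftarrow>as. [:-a,1:])" unfolding setas by (rule prod.distinct_set_conv_list[OF dist])
  thus "map_poly (of_rat :: rat \<Rightarrow> complex) p = (\<Prod>\<beta>\<in>{\<beta>::complex. poly (map_poly of_rat p) \<beta> = 0}. [:-\<beta>, 1:])"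
    using fa' by (simp add: R_def q_def)
  show "card {\<beta>::complex. poly (map_poly of_rat p) \<beta> = 0} = degree p" using cardR by (simp add: R_def)
  show "finite {\<beta>::complex. poly (map_poly of_rat p) \<beta> = 0}" using setas by (simp add: R_def)
qed



lemma x_root:
  fixes \<beta> :: complex
  assumes s: "s \<ge> 2" and r: "\<beta>^(s-1) * (\<beta> + of_nat s) - of_nat (s-1) ^ (s-1) = 0"
  shows "\<beta> \<noteq> 0" "(of_nat (s-1) / \<beta>) ^ s = of_nat s * (of_nat (s-1) / \<beta>) + of_nat (s-1)"
proof -
  define c :: complex where "c = of_nat (s-1)"
  have c0: "c \<noteq> 0" using s by (simp add: c_def)
  have e: "c ^ (s-1) = \<beta>^(s-1) * (\<beta> + of_nat s)" using r by (simp add: c_def)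
  show b0: "\<beta> \<noteq> 0"
  proof
    assume "\<beta> = 0"
    hence "c ^ (s-1) = 0" using e s by simp
    thus False using c0 by simp
  qed
  have ss: "s = Suc (s-1)" using s by simp
  have "(c / \<beta>) ^ s = c * c^(s-1) / (\<beta> * \<beta>^(s-1))" by (subst ss) (simp only: power_divide power_Suc times_divide_times_eq)
  also have "\<dots> = c * (\<beta>^(s-1) * (\<beta> + of_nat s)) / (\<beta> * \<beta>^(s-1))" by (rule arg_cong[OF e, of "\<lambda>t. c * t / (\<beta> * \<beta>^(s-1))"])
  also have "\<dots> = c * (\<beta> + of_nat s) / \<beta>"
  proof -
    have bp: "\<beta>^(s-1) \<noteq> 0" using b0 by simp
    have "c * (\<beta>^(s-1) * (\<beta> + of_nat s)) = \<beta>^(s-1) * (c * (\<beta> + of_nat s))" by (rule mult.left_commute)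
    moreover have "\<beta> * \<beta>^(s-1) = \<beta>^(s-1) * \<beta>" by (rule mult.commute)
    ultimately show ?thesis using nonzero_mult_divide_mult_cancel_left[OF bp] by metis
  qed
  also have "\<dots> = c * \<beta> / \<beta> + c * of_nat s / \<beta>" by (simp only: distrib_left add_divide_distrib)
  also have "c * \<beta> / \<beta> = c" using b0 by (rule nonzero_mult_div_cancel_right)
  also have "c * of_nat s / \<beta> = of_nat s * (c / \<beta>)" by (simp only: times_divide_eq_right mult.commute)
  also have "c + of_nat s * (c / \<beta>) = of_nat s * (c / \<beta>) + c" by (rule add.commute)
  finally show "(of_nat (s-1) / \<beta>) ^ s = of_nat s * (of_nat (s-1) / \<beta>) + of_nat (s-1)" by (simp only: c_def)
qed

lemma of_rat_Reals: "(of_rat q :: complex) \<in> \<real>"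
proof (cases q)
  case (Fract a b)
  thus ?thesis by (simp add: of_rat_rat)
qed

lemma cnj_root_rat:
  fixes p :: "rat poly"
  assumes "poly (map_poly of_rat p) (\<beta>::complex) = 0"
  shows "poly (map_poly of_rat p) (cnj \<beta>) = 0"
proof -
  have "\<And>n. Polynomial.coeff (map_poly (of_rat :: rat \<Rightarrow> complex) p) n \<in> \<real>"
    by (simp add: of_rat_hom.coeff_map_poly_hom of_rat_Reals)
  hence "cnj (poly (map_poly of_rat p) \<beta>) = poly (map_poly of_rat p) (cnj \<beta>)" by (rule poly_cnj_real)
  thus ?thesis using assms by simp
qed



lemma prod_ge1_gt:
  fixes F :: "'a \<Rightarrow> real"
  assumes fin: "finite R" and a: "a \<in> R" and ge: "\<And>b. b \<in> R \<Longrightarrow> F b \<ge> 1" and Fa: "F a > 1"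
  shows "prod F R > 1"
proof -
  have sp: "prod F R = F a * prod F (R - {a})" using fin a by (rule prod.remove)
  have "prod F (R - {a}) \<ge> 1" using ge by (intro prod_ge_1) auto
  hence "F a * 1 \<le> F a * prod F (R - {a})" by (rule mult_left_mono) (use Fa in linarith)
  thus ?thesis using sp Fa by linarith
qed

lemma prod_ne_1:
  fixes R :: "complex set" and s :: nat and \<alpha> :: complex
  assumes s: "s \<ge> 26" and fin: "finite R" and \<alpha>R: "\<alpha> \<in> R"
    and xr: "\<And>\<beta>. \<beta> \<in> R \<Longrightarrow> \<beta> \<noteq> 0 \<and> (of_nat (s-1) / \<beta>) ^ s = of_nat s * (of_nat (s-1) / \<beta>) + of_nat (s-1)"
    and cnjR: "\<And>\<beta>. \<beta> \<in> R \<Longrightarrow> cnj \<beta> \<in> R"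
    and nontriv: "odd s \<Longrightarrow> \<alpha> \<noteq> 1 - of_nat s"
  shows "(\<Prod>\<beta>\<in>R. cmod (of_nat (s-1) / \<beta>)) \<noteq> 1"
proof -
  define c :: complex where "c = of_nat (s-1)"
  define F where "F = (\<lambda>\<beta>. cmod (c / \<beta>))"
  have c0: "c \<noteq> 0" using s by (simp add: c_def)
  have eqX: "\<And>\<beta>. \<beta> \<in> R \<Longrightarrow> (c / \<beta>) ^ s = of_nat s * (c / \<beta>) + of_nat (s-1)"
    using xr unfolding c_def by blast
  have nz: "\<And>\<beta>. \<beta> \<in> R \<Longrightarrow> \<beta> \<noteq> 0" using xr by blast
  have s2: "s \<ge> 2" using s by simp
  have Xinj: "\<And>\<beta> \<beta>'. c / \<beta> = c / \<beta>' \<Longrightarrow> \<beta> = \<beta>'" using c0 by (simp add: divide_cancel_left)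
  have Fpos: "\<And>\<beta>. \<beta> \<in> R \<Longrightarrow> F \<beta> > 0" using nz c0 by (simp add: F_def)
  have Fnn: "\<And>\<beta>. \<beta> \<in> R \<Longrightarrow> F \<beta> \<ge> 0" using Fpos less_imp_le by blast
  have goal: "prod F R \<noteq> 1"
  proof (cases "odd s")
    case True
    have ge: "\<And>\<beta>. \<beta> \<in> R \<Longrightarrow> F \<beta> \<ge> 1"
    proof -
      fix \<beta> assume b: "\<beta> \<in> R"
      show "F \<beta> \<ge> 1"
      proof (cases "c / \<beta> = -1")
        case True thus ?thesis by (simp add: F_def)
      next
        case False thus ?thesis using root_odd_gt1[OF eqX[OF b] s2 \<open>odd s\<close> False] by (simp add: F_def)
      qed
    qed
    have "c / \<alpha> \<noteq> -1"
    proof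
      assume "c / \<alpha> = -1"
      hence "c = - \<alpha>" using nz[OF \<alpha>R] by (simp add: divide_eq_eq)
      hence "\<alpha> = - c" by simp
      hence "\<alpha> = 1 - of_nat s" using s by (simp add: c_def of_nat_diff minus_diff_eq)
      with nontriv True show False by simp
    qed
    hence "F \<alpha> > 1" using root_odd_gt1[OF eqX[OF \<alpha>R] s2 True] by (simp add: F_def)
    hence "prod F R > 1" using prod_ge1_gt[of R \<alpha> F, OF fin \<alpha>R ge] by blast
    thus ?thesis by simp
  next
    case False
    hence ev: "even s" by simp
    have ne1: "\<And>\<beta>. \<beta> \<in> R \<Longrightarrow> F \<beta> \<noteq> 1"
    proof
      fix \<beta> assume b: "\<beta> \<in> R" and "F \<beta> = 1"
      hence "cmod (c / \<beta>) = 1" by (simp add: F_def)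
      from root_unit_circle(2)[OF eqX[OF b] s2 this] ev show False by simp
    qed
    show ?thesis
    proof (cases "\<forall>\<beta>\<in>R. F \<beta> > 1")
      case True
      hence "prod F R > 1" using prod_ge1_gt[of R \<alpha> F, OF fin \<alpha>R] \<alpha>R by (simp add: less_imp_le)
      thus ?thesis by simp
    next
      case False
      then obtain b where bR: "b \<in> R" and "\<not> F b > 1" by blast
      hence Fb: "F b < 1" using ne1[OF bR] by simp
      have uniq: "\<And>\<beta>. \<beta> \<in> R \<Longrightarrow> F \<beta> < 1 \<Longrightarrow> \<beta> = b"
      proof -
        fix \<beta> assume b': "\<beta> \<in> R" and "F \<beta> < 1"
        hence "c / \<beta> = c / b" using root_pair[OF eqX[OF b'] eqX[OF bR] s2] Fb by (simp add: F_def)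
        thus "\<beta> = b" by (rule Xinj)
      qed
      have gt: "\<And>\<beta>. \<beta> \<in> R - {b} \<Longrightarrow> F \<beta> > 1"
      proof -
        fix \<beta> assume "\<beta> \<in> R - {b}"
        hence "\<beta> \<in> R" "\<beta> \<noteq> b" by auto
        hence "\<not> F \<beta> < 1" using uniq by blast
        with ne1[OF \<open>\<beta> \<in> R\<close>] show "F \<beta> > 1" by simp
      qed
      have "real s * F b \<ge> real s - 2" using root_small_lb[OF eqX[OF bR] s2] Fb by (simp add: F_def)
      hence lb: "F b \<ge> (real s - 2) / real s" using s by (simp add: field_simps)
      have sp: "prod F R = F b * prod F (R - {b})" using fin bR by (rule prod.remove)
      show ?thesis
      proof (cases "R - {b} = {}")
        case True
        hence "prod F (R - {b}) = 1" by (simp only: prod.empty)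
        hence "prod F R = F b" using sp by simp
        thus ?thesis using Fb by simp
      next
        case False
        then obtain b1 where b1: "b1 \<in> R - {b}" by blast
        have fin': "finite (R - {b})" using fin by simp
        have ge1: "\<And>\<beta>. \<beta> \<in> R - {b} \<Longrightarrow> F \<beta> \<ge> 1" using gt by (simp add: less_imp_le)
        have b1R: "b1 \<in> R" using b1 by simp
        define y where "y = c / b1"
        have eqy: "y ^ s = of_nat s * y + of_nat (s-1)" using eqX[OF b1R] by (simp add: y_def)
        have Fb1: "F b1 = cmod y" by (simp add: F_def y_def)
        have key: "prod F (R - {b}) * ((real s - 2) / real s) > 1"
        proof (cases "Im y = 0")
          case True
          have "prod F {b1} \<le> prod F (R - {b})"
            by (rule prod_mono2[OF fin']) (use b1 ge1 Fnn in auto)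
          hence A: "cmod y \<le> prod F (R - {b})" using Fb1 by simp
          have "cmod y > 1" using gt[OF b1] Fb1 by simp
          hence B: "cmod y * ((real s - 2) / real s) > 1" by (rule root_even_real[OF eqy ev s True])
          have "cmod y * ((real s - 2) / real s) \<le> prod F (R - {b}) * ((real s - 2) / real s)"
            using A s by (intro mult_right_mono) auto
          thus ?thesis using B by linarith
        next
          case False
          define b2 where "b2 = cnj b1"
          have b2R: "b2 \<in> R" using cnjR[OF b1R] by (simp add: b2_def)
          have yc: "c / b2 = cnj y" by (simp add: b2_def y_def c_def)
          have "b2 \<noteq> b1"
          proof
            assume "b2 = b1"
            hence "cnj y = y" using yc by (simp add: y_def)
            hence "Im y = 0" by (simp add: complex_eq_iff)
            with False show False by simp
          qed
          have Fb2: "F b2 = cmod y" using yc by (simp add: F_def)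
          have "b2 \<noteq> b" using Fb2 Fb gt[OF b1] Fb1 by auto
          hence b2R': "b2 \<in> R - {b}" using b2R by simp
          have "prod F {b1, b2} \<le> prod F (R - {b})"
            by (rule prod_mono2[OF fin']) (use b1 b2R' ge1 Fnn in auto)
          moreover have "prod F {b1, b2} = cmod y ^ 2" using \<open>b2 \<noteq> b1\<close> Fb1 Fb2 by (simp add: power2_eq_square)
          ultimately have A: "cmod y ^ 2 \<le> prod F (R - {b})" by simp
          have B: "cmod y ^ 2 * ((real s - 2) / real s) > 1" by (rule root_nonreal_big[OF eqy ev s False])
          have "cmod y ^ 2 * ((real s - 2) / real s) \<le> prod F (R - {b}) * ((real s - 2) / real s)"
            using A s by (intro mult_right_mono) auto
          thus ?thesis using B by linarith
        qed
        have pp: "prod F (R - {b}) \<ge> 0" using Fpos by (intro prod_nonneg) (auto simp: less_imp_le)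
        have "(real s - 2) / real s * prod F (R - {b}) \<le> F b * prod F (R - {b})"
          using lb pp by (rule mult_right_mono)
        hence "prod F R > 1" using key sp by (simp add: mult.commute)
        thus ?thesis by simp
      qed
    qed
  qed
  thus ?thesis by (simp add: F_def c_def)
qed



theorem mainTheorem20:
  fixes s :: nat and \<alpha> :: complex and p :: "rat poly" and n :: int
  assumes "s \<ge> 26"
    and "poly (map_poly of_int (psi s)) \<alpha> = 0"
    and "\<not> trivial_root s \<alpha>"
    and "irreducible p" and "lead_coeff p = 1" and "poly (map_poly of_rat p) \<alpha> = 0"
    and "of_int n * (\<Prod>\<beta>\<in>{\<beta>. poly (map_poly of_rat p) \<beta> = 0}. \<beta>)
           = (of_nat (s - 1) :: complex) ^ degree p"
  shows "real (degree p) > ln \<bar>real_of_int n\<bar> * (real s - 1) / (1 + ln (real s - 1))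
    \<and> ln \<bar>real_of_int n\<bar> * (real s - 1) / (1 + ln (real s - 1)) \<ge> delta s"
proof -
  have s26: "s \<ge> 26" using assms(1) .
  have s2: "s \<ge> 2" using s26 by simp
  have irr: "irreducible p" by (rule assms(4))
  have mon: "lead_coeff p = 1" by (rule assms(5))
  define R where "R = {\<beta>::complex. poly (map_poly of_rat p) \<beta> = 0}"
  define d where "d = degree p"
  have fin: "finite R" and cardR: "card R = d"
    and fac: "map_poly (of_rat :: rat \<Rightarrow> complex) p = (\<Prod>\<beta>\<in>R. [:-\<beta>, 1:])"
    using roots_factor[OF irr mon] by (simp_all add: R_def d_def)
  have \<alpha>R: "\<alpha> \<in> R" using assms(6) by (simp add: R_def)
  have dvd: "p dvd map_poly of_int (psi s)" by (rule p_dvd_psi[OF irr assms(6) assms(2)])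
  obtain P where PP: "p = map_poly of_int P" using p_integral[OF dvd mon s2] by blast
  obtain h where ph: "map_poly of_int (psi s) = p * h" using dvd by (elim dvdE)
  have mm: "map_poly (of_rat :: rat \<Rightarrow> complex) (map_poly of_int (psi s)) = map_poly of_int (psi s)"
    by (subst map_poly_map_poly) (auto simp: o_def)
  have rootpsi: "\<And>\<beta>. \<beta> \<in> R \<Longrightarrow> poly (map_poly (of_int :: int \<Rightarrow> complex) (psi s)) \<beta> = 0"
  proof -
    fix \<beta> assume b: "\<beta> \<in> R"
    have "map_poly (of_rat :: rat \<Rightarrow> complex) (map_poly of_int (psi s)) = map_poly of_rat p * map_poly of_rat h"
    proof -
      interpret mh: map_poly_comm_ring_hom "of_rat :: rat \<Rightarrow> complex" by unfold_locales
      show ?thesis unfolding ph by (rule mh.hom_mult)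
    qed
    hence "poly (map_poly (of_int :: int \<Rightarrow> complex) (psi s)) \<beta> = poly (map_poly of_rat p) \<beta> * poly (map_poly of_rat h) \<beta>"
      unfolding mm by simp
    thus "poly (map_poly (of_int :: int \<Rightarrow> complex) (psi s)) \<beta> = 0" using b by (simp add: R_def)
  qed
  have xr: "\<And>\<beta>. \<beta> \<in> R \<Longrightarrow> \<beta> \<noteq> 0 \<and> (of_nat (s-1) / \<beta>) ^ s = of_nat s * (of_nat (s-1) / \<beta>) + of_nat (s-1)"
  proof -
    fix \<beta> assume b: "\<beta> \<in> R"
    have "\<beta>^(s-1) * (\<beta> + of_nat s) - of_nat (s-1) ^ (s-1) = 0"
      using rootpsi[OF b] psi_poly[of s \<beta>] s2 by simp
    from x_root[OF s2 this] show "\<beta> \<noteq> 0 \<and> (of_nat (s-1) / \<beta>) ^ s = of_nat s * (of_nat (s-1) / \<beta>) + of_nat (s-1)"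
      by blast
  qed
  have nz: "\<And>\<beta>. \<beta> \<in> R \<Longrightarrow> \<beta> \<noteq> 0" using xr by blast
  have cnjR: "\<And>\<beta>. \<beta> \<in> R \<Longrightarrow> cnj \<beta> \<in> R" using cnj_root_rat by (simp add: R_def)
  have nontriv: "odd s \<Longrightarrow> \<alpha> \<noteq> 1 - of_nat s" using assms(3) by (auto simp: trivial_root_def)

  define N where "N = (\<Prod>\<beta>\<in>R. \<beta>)"
  have nN: "of_int n * N = (of_nat (s-1) :: complex) ^ d" using assms(7) by (simp add: N_def R_def d_def)
  have "poly (map_poly (of_rat :: rat \<Rightarrow> complex) p) 0 = (\<Prod>\<beta>\<in>R. poly [:-\<beta>, 1:] 0)"
    by (simp only: fac poly_prod)
  also have "\<dots> = (\<Prod>\<beta>\<in>R. (-1) * \<beta>)" by simp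
  also have "\<dots> = (-1) ^ d * N" by (simp only: prod.distrib prod_constant cardR N_def)
  finally have N1: "poly (map_poly (of_rat :: rat \<Rightarrow> complex) p) 0 = (-1) ^ d * N" .
  define c0 where "c0 = poly P 0"
  have "poly (map_poly (of_rat :: rat \<Rightarrow> complex) p) 0 = of_rat (poly p 0)" by (rule of_rat_hom.poly_map_poly_0)
  also have "poly p 0 = of_int c0" unfolding PP c0_def by (rule of_int_hom.poly_map_poly_0)
  finally have N2: "(-1) ^ d * N = of_int c0" using N1 by simp
  have N3: "N = (-1) ^ d * of_int c0"
  proof -
    have "(-1::complex) ^ d * ((-1) ^ d * N) = N" by (simp flip: power_mult_distrib)
    thus ?thesis using N2 by simp
  qed
  have inteq: "n * ((-1) ^ d * c0) = int (s-1) ^ d"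
  proof -
    have "(of_int (n * ((-1) ^ d * c0)) :: complex) = of_int n * N" by (simp add: N3)
    also have "\<dots> = of_int (int (s-1) ^ d)" using nN by simp
    finally show ?thesis by (simp only: of_int_eq_iff)
  qed
  have n0: "n \<noteq> 0" using inteq s2 by auto

  have pF: "(\<Prod>\<beta>\<in>R. cmod (of_nat (s-1) / \<beta>)) = \<bar>real_of_int n\<bar>"
  proof -
    have pos: "(\<Prod>\<beta>\<in>R. cmod \<beta>) > 0" using nz by (intro prod_pos) auto
    have "cmod (of_int n * N) = cmod ((of_nat (s-1) :: complex) ^ d)" using nN by simp
    hence e1: "\<bar>real_of_int n\<bar> * (\<Prod>\<beta>\<in>R. cmod \<beta>) = real (s-1) ^ d"
      by (simp add: norm_mult N_def prod_norm norm_power)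
    have "(\<Prod>\<beta>\<in>R. cmod (of_nat (s-1) / \<beta>)) = (\<Prod>\<beta>\<in>R. real (s-1) / cmod \<beta>)"
      by (simp add: norm_divide)
    also have "\<dots> = real (s-1) ^ d / (\<Prod>\<beta>\<in>R. cmod \<beta>)" by (simp add: prod_dividef cardR)
    also have "\<dots> = \<bar>real_of_int n\<bar>" using e1 pos by (simp add: field_simps)
    finally show ?thesis .
  qed

  have rs1: "real (s-1) = real s - 1" using s2 by (simp add: of_nat_diff)
  have "real s - 1 > 1" using s26 by simp
  hence "ln (real s - 1) > 0" by (rule ln_gt_zero)
  hence Kpos: "1 + ln (real s - 1) > 0" by linarith
  have spos: "real s - 1 > 0" using s26 by simp
  have each: "\<And>\<beta>. \<beta> \<in> R \<Longrightarrow> ln (cmod (of_nat (s-1) / \<beta>)) < (1 + ln (real s - 1)) / (real s - 1)"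
  proof -
    fix \<beta> assume b: "\<beta> \<in> R"
    define r where "r = cmod (of_nat (s-1) / \<beta>)"
    have rpos: "r > 0" using nz[OF b] s2 by (simp add: r_def)
    have lt0: "r ^ (s-1) < exp 1 * real (s-1)" unfolding r_def using root_ub[OF s26] xr[OF b] by blast
    have pos: "exp 1 * real (s-1) > 0" using s2 by simp
    have rp: "r ^ (s-1) > 0" using rpos by simp
    have "ln (r ^ (s-1)) < ln (exp 1 * real (s-1))" using ln_less_cancel_iff[OF rp pos] lt0 by blast
    hence "real (s-1) * ln r < 1 + ln (real (s-1))" using s2 by (simp add: ln_realpow ln_mult)
    hence "(real s - 1) * ln r < 1 + ln (real s - 1)" using rs1 by simp
    thus "ln (cmod (of_nat (s-1) / \<beta>)) < (1 + ln (real s - 1)) / (real s - 1)"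
      using spos by (simp add: r_def field_simps)
  qed
  have lnn: "ln \<bar>real_of_int n\<bar> = (\<Sum>\<beta>\<in>R. ln (cmod (of_nat (s-1) / \<beta>)))"
    unfolding pF[symmetric] using fin nz s2 by (intro ln_prod) auto
  also have "\<dots> < (\<Sum>\<beta>\<in>R. (1 + ln (real s - 1)) / (real s - 1))"
    using fin \<alpha>R each by (intro sum_strict_mono) auto
  also have "\<dots> = real d * ((1 + ln (real s - 1)) / (real s - 1))" by (simp add: cardR)
  finally have lt: "ln \<bar>real_of_int n\<bar> < real d * ((1 + ln (real s - 1)) / (real s - 1))" .
  have part1: "real (degree p) > ln \<bar>real_of_int n\<bar> * (real s - 1) / (1 + ln (real s - 1))"
    using lt Kpos spos by (simp add: d_def field_simps)

  have ne1: "\<bar>real_of_int n\<bar> \<noteq> 1" using prod_ne_1[OF s26 fin \<alpha>R xr cnjR nontriv] pF by simp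
  define m where "m = nat \<bar>n\<bar>"
  have mi: "int m = \<bar>n\<bar>" by (simp add: m_def)
  have m1: "m \<noteq> 1" using ne1 mi by (auto simp: m_def)
  have m0: "m > 0" using n0 by (simp add: m_def)
  obtain q where q: "prime q" "q dvd m" using prime_factor_nat[OF m1] by blast
  have "int q dvd \<bar>n\<bar>" using q(2) mi by (metis of_nat_dvd_iff)
  hence "int q dvd n" by simp
  hence "int q dvd int (s-1) ^ d" unfolding inteq[symmetric] by (rule dvd_mult2)
  hence "q dvd (s-1) ^ d" by (simp flip: of_nat_power)
  hence "q dvd s - 1" by (rule prime_dvd_power_nat[OF q(1)])
  hence qin: "q \<in> prime_factors (s-1)" using q(1) s2 by (simp add: in_prime_factors_iff)
  have finpf: "finite (prime_factors (s-1))" by simp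
  have lpf_le: "least_prime_factor (s-1) \<le> q" unfolding least_prime_factor_def using finpf qin by (rule Min_le)
  have "least_prime_factor (s-1) \<in> prime_factors (s-1)" unfolding least_prime_factor_def
    using finpf qin by (intro Min_in) auto
  hence lpf_pos: "least_prime_factor (s-1) > 0" by (auto simp: in_prime_factors_iff prime_gt_0_nat)
  have "q \<le> m" using q(2) m0 by (rule dvd_imp_le)
  hence "real (least_prime_factor (s-1)) \<le> \<bar>real_of_int n\<bar>" using lpf_le mi
    by (metis of_int_abs of_int_of_nat_eq of_nat_le_iff order.trans)
  hence "ln (real (least_prime_factor (s-1))) \<le> ln \<bar>real_of_int n\<bar>" using lpf_pos by (subst ln_le_cancel_iff) auto
  hence "ln (real (least_prime_factor (s-1))) * (real s - 1) \<le> ln \<bar>real_of_int n\<bar> * (real s - 1)"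
    using spos by (intro mult_right_mono) auto
  hence part2: "delta s \<le> ln \<bar>real_of_int n\<bar> * (real s - 1) / (1 + ln (real s - 1))"
    unfolding delta_def using Kpos by (intro divide_right_mono) auto
  show ?thesis using part1 part2 by simp
qed


end
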